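(* In the uncoupled setting described in the context, for $t\in\mathbb{C}^\times$ not lying on any ray $\ell_\gamma$ with $\bar\Omega(\gamma)\neq0$, the function \[ \log\tau =\frac{1}{4\pi^2}\sum_{\gamma\in\Gamma_\star}\sigma_\gamma\bar\Omega(\gamma)\, e^{2\pi i\theta_\gamma} \Big[\int_{\ell_\gamma} \frac{\mathrm{d} t'}{t'} \,\frac{t}{t'-t}\Big(1+2\pi i\, \frac{Z_\gamma}{t'}\Big)e^{-2\pi i Z_\gamma/t'}-\log (Z_\gamma/t)\Big] \] (with any locally constant choice of branches of $\log(Z_\gamma/t)$) satisfies, for each $a=1,\dots,m$, \[ \sum_{b=1}^{m} \omega^{ab} \frac{\partial \log\tau}{\partial z^b} =\frac{\partial}{\partial t} \log\Big(\mathcal{X}_{\gamma^a}(t)/\mathcal{X}^{\rm sf}_{\gamma^a}(t)\Big). \]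
   Context: Let $\Gamma$ be a lattice with basis $\gamma^1,\dots,\gamma^m$ and skew-symmetric integer pairing $\langle\cdot,\cdot\rangle$ with $\omega^{ab}=\langle\gamma^a,\gamma^b\rangle$ invertible; $\gamma=\sum_aq_a\gamma^a$, $\Gamma_\star=\Gamma\setminus\{0\}$; coordinates $z^a,\theta^a$, $Z_\gamma=\sum_aq_az^a$, $\theta_\gamma=\sum_aq_a\theta^a$; $\sigma$ a quadratic refinement ($\sigma_\gamma\sigma_{\gamma'}=(-1)^{\langle\gamma,\gamma'\rangle}\sigma_{\gamma+\gamma'}$); $\mathcal{X}^{\rm sf}_\gamma(t)=\sigma_\gamma e^{2\pi i(\theta_\gamma-Z_\gamma/t)}$; for $Z_\gamma\ne0$, $\ell_\gamma=\{iZ_\gamma/s:s>0\}$ oriented from $0$ to $\infty$. Let $\bar\Omega:\Gamma_\star\to\mathbb{Q}$ be locally constant in $z$, with $Z_\gamma\neq0$ when $\bar\Omega(\gamma)\ne0$, and uncoupled: $\langle\gamma,\gamma'\rangle=0$ whenever $\bar\Omega(\gamma)\neq0$ and $\bar\Omega(\gamma')\ne0$. In this case the TBA system has the explicit solution \[ \mathcal{X}_\gamma(t)=\mathcal{X}^{\rm sf}_\gamma(t)\exp\Big[\frac{1}{2\pi i}\sum_{\gamma'\in\Gamma_\star}\bar\Omega(\gamma')\langle\gamma,\gamma'\rangle\int_{\ell_{\gamma'}}\frac{\mathrm{d}t'}{t'}\frac{t}{t'-t}\mathcal{X}^{\rm sf}_{\gamma'}(t')\Big], \] which defines $\mathcal{X}_\gamma$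 here. All sums over $\Gamma$ are assumed to converge and be differentiable termwise. *)

theory Defs
  imports "HOL-Analysis.Analysis"
begin

text \<open>The lattice Gamma is identified with 'm => int via the basis gamma^1..gamma^m
  (the index type 'm is finite); gamma = sum_a q_a gamma^a is its charge vector q.\<close>

definition Gstar :: "('m::finite \<Rightarrow> int) set" where
  "Gstar = {q. \<exists>a. q a \<noteq> 0}"

definition basis_charge :: "'m::finite \<Rightarrow> ('m \<Rightarrow> int)" where
  "basis_charge a = (\<lambda>b. if b = a then 1 else 0)"

definition pair :: "('m::finite \<Rightarrow> 'm \<Rightarrow> int) \<Rightarrow> ('m \<Rightarrow> int) \<Rightarrow> ('m \<Rightarrow> int) \<Rightarrow> int" where
  "pair \<omega> p q = (\<Sum>a\<in>UNIV. \<Sum>b\<in>UNIV. p a * q b * \<omega> a b)"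

definition Zc :: "('m::finite \<Rightarrow> complex) \<Rightarrow> ('m \<Rightarrow> int) \<Rightarrow> complex" where
  "Zc z q = (\<Sum>a\<in>UNIV. of_int (q a) * z a)"

definition quad_refinement :: "('m::finite \<Rightarrow> 'm \<Rightarrow> int) \<Rightarrow> (('m \<Rightarrow> int) \<Rightarrow> int) \<Rightarrow> bool" where
  "quad_refinement \<omega> \<sigma> \<longleftrightarrow> (\<forall>g. \<sigma> g \<in> {-1, 1}) \<and>
     (\<forall>g g'. \<sigma> g * \<sigma> g' = (if even (pair \<omega> g g') then 1 else -1) * \<sigma> (\<lambda>a. g a + g' a))"

definition Xsf :: "(('m::finite \<Rightarrow> int) \<Rightarrow> int) \<Rightarrow> ('m \<Rightarrow> complex) \<Rightarrow> ('m \<Rightarrow> complex)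
     \<Rightarrow> ('m \<Rightarrow> int) \<Rightarrow> complex \<Rightarrow> complex" where
  "Xsf \<sigma> \<theta> z g t = of_int (\<sigma> g) * exp (2 * pi * \<i> * (Zc \<theta> g - Zc z g / t))"

definition ray :: "complex \<Rightarrow> complex set" where
  "ray Z = {\<i> * Z / of_real s | s. s > 0}"

text \<open>Integral int_{l} dt'/t' h(t') along the ray l = {i Z u : u > 0}, oriented from 0 to
  infinity, parametrised by t' = i Z u (so dt'/t' = du/u).\<close>
definition ray_int :: "complex \<Rightarrow> (complex \<Rightarrow> complex) \<Rightarrow> complex" where
  "ray_int Z h = integral {0<..} (\<lambda>u::real. h (\<i> * Z * of_real u) / of_real u)"

definition X_term :: "('m::finite \<Rightarrow> 'm \<Rightarrow> int) \<Rightarrow> (('m \<Rightarrow> int) \<Rightarrow> int) \<Rightarrow> (('m \<Rightarrow> int) \<Rightarrow> rat)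
     \<Rightarrow> ('m \<Rightarrow> complex) \<Rightarrow> ('m \<Rightarrow> complex) \<Rightarrow> ('m \<Rightarrow> int) \<Rightarrow> ('m \<Rightarrow> int) \<Rightarrow> complex \<Rightarrow> complex" where
  "X_term \<omega> \<sigma> \<Omega> \<theta> z g g' s =
     of_rat (\<Omega> g') * of_int (pair \<omega> g g') *
     ray_int (Zc z g') (\<lambda>t'. s / (t' - s) * Xsf \<sigma> \<theta> z g' t')"

definition XTBA :: "('m::finite \<Rightarrow> 'm \<Rightarrow> int) \<Rightarrow> (('m \<Rightarrow> int) \<Rightarrow> int) \<Rightarrow> (('m \<Rightarrow> int) \<Rightarrow> rat)
     \<Rightarrow> ('m \<Rightarrow> complex) \<Rightarrow> ('m \<Rightarrow> complex) \<Rightarrow> ('m \<Rightarrow> int) \<Rightarrow> complex \<Rightarrow> complex" where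
  "XTBA \<omega> \<sigma> \<Omega> \<theta> z g s =
     Xsf \<sigma> \<theta> z g s *
     exp (1 / (2 * pi * \<i>) * (\<Sum>\<^sub>\<infinity>g'\<in>Gstar. X_term \<omega> \<sigma> \<Omega> \<theta> z g g' s))"

text \<open>Summand gamma of log tau (without the prefactor 1/(4 pi^2)); L g w is the chosen
  branch of log(Z_gamma(w)/t).\<close>
definition tau_term :: "(('m::finite \<Rightarrow> int) \<Rightarrow> int) \<Rightarrow> (('m \<Rightarrow> int) \<Rightarrow> rat) \<Rightarrow> ('m \<Rightarrow> complex)
     \<Rightarrow> complex \<Rightarrow> (('m \<Rightarrow> int) \<Rightarrow> ('m \<Rightarrow> complex) \<Rightarrow> complex) \<Rightarrow> ('m \<Rightarrow> int) \<Rightarrow> ('m \<Rightarrow> complex) \<Rightarrow> complex" where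
  "tau_term \<sigma> \<Omega> \<theta> t L g w =
     of_int (\<sigma> g) * of_rat (\<Omega> g) * exp (2 * pi * \<i> * Zc \<theta> g) *
     (ray_int (Zc w g)
        (\<lambda>t'. t / (t' - t) * (1 + 2 * pi * \<i> * Zc w g / t') * exp (- 2 * pi * \<i> * Zc w g / t'))
      - L g w)"

definition log_tau :: "(('m::finite \<Rightarrow> int) \<Rightarrow> int) \<Rightarrow> (('m \<Rightarrow> int) \<Rightarrow> rat) \<Rightarrow> ('m \<Rightarrow> complex)
     \<Rightarrow> complex \<Rightarrow> (('m \<Rightarrow> int) \<Rightarrow> ('m \<Rightarrow> complex) \<Rightarrow> complex) \<Rightarrow> ('m \<Rightarrow> complex) \<Rightarrow> complex" where
  "log_tau \<sigma> \<Omega> \<theta> t L w = 1 / (4 * pi\<^sup>2) * (\<Sum>\<^sub>\<infinity>g\<in>Gstar. tau_term \<sigma> \<Omega> \<theta> t L g w)"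

definition termwise_diff :: "'a set \<Rightarrow> ('a \<Rightarrow> complex \<Rightarrow> complex) \<Rightarrow> complex \<Rightarrow> bool" where
  "termwise_diff A f x \<longleftrightarrow>
     (\<forall>\<^sub>F y in nhds x. (\<lambda>g. f g y) summable_on A) \<and>
     (\<lambda>g. deriv (f g) x) summable_on A \<and>
     ((\<lambda>y. \<Sum>\<^sub>\<infinity>g\<in>A. f g y) has_field_derivative (\<Sum>\<^sub>\<infinity>g\<in>A. deriv (f g) x)) (at x)"

end

theory Submission
  imports Defs "HOL-Analysis.Analysis"
begin


lemma env_int: "set_integrable lborel {0<..} (\<lambda>u::real. 1/(u+1)^2)"
proof -
  have "set_integrable lborel (einterval (ereal 0) \<infinity>) (\<lambda>u::real. 1/(u+1)^2)"
  proof (rule interval_integral_FTC_nonneg(1)[where F="\<lambda>u. -1/(u+1)" and A="-1" and B=0])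
    fix x assume "ereal 0 < ereal x"
    then have x: "x > 0" by simp
    show "DERIV (\<lambda>u. -1/(u+1)) x :> 1/(x+1)^2"
      using x by (auto intro!: derivative_eq_intros simp: power2_eq_square)
    show "isCont (\<lambda>u::real. 1/(u+1)^2) x" using x by (auto intro!: continuous_intros)
  next
    show "AE x in lborel. ereal 0 < ereal x \<longrightarrow> ereal x < \<infinity> \<longrightarrow> 0 \<le> 1/(x+1)^2" by auto
  next
    show "(((\<lambda>u. -1/(u+1)) \<circ> real_of_ereal) \<longlongrightarrow> (-1)) (at_right (ereal 0))"
      unfolding ereal_tendsto_simps
      by (auto intro!: tendsto_eq_intros)
  next
    have "((\<lambda>u::real. 1/(u+1)) \<longlongrightarrow> 0) at_top"
      proof (rule tendsto_divide_0[OF tendsto_const])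
      have "filterlim (\<lambda>u::real. 1 + u) at_top at_top"
        by (rule filterlim_tendsto_add_at_top[OF tendsto_const filterlim_ident])
      then show "filterlim (\<lambda>u::real. u + 1) at_infinity at_top"
        by (simp add: add.commute filterlim_at_top_imp_at_infinity)
    qed
    then have "((\<lambda>u::real. -1/(u+1)) \<longlongrightarrow> 0) at_top"
      using tendsto_minus[of "\<lambda>u::real. 1/(u+1)" 0 at_top] by simp
    then show "(((\<lambda>u. -1/(u+1)) \<circ> real_of_ereal) \<longlongrightarrow> 0) (at_left \<infinity>)"
      unfolding ereal_tendsto_simps .
  qed simp
  then show ?thesis by simp
qed

lemma int_ok:
  fixes f :: "real \<Rightarrow> complex"
  assumes cf: "continuous_on {0<..} f" and bd: "\<And>u. u > 0 \<Longrightarrow> norm (f u) \<le> K / (u+1)^2"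
  shows "set_integrable lborel {0<..} f" "f integrable_on {0<..}"
proof -
  have e: "set_integrable lborel {0<..} (\<lambda>u::real. K * (1/(u+1)^2))"
    using env_int by (intro set_integrable_mult_right) auto
  have m: "set_borel_measurable lborel {0<..} f"
    unfolding set_borel_measurable_def
    using borel_measurable_continuous_on_indicator[OF _ cf] by simp
  show si: "set_integrable lborel {0<..} f"
  proof (rule set_integrable_bound[OF e m])
    show "AE x in lborel. x \<in> {0<..} \<longrightarrow> norm (f x) \<le> norm (K * (1 / (x + 1)\<^sup>2))"
    proof (rule AE_I2, rule impI)
      fix x :: real assume "x \<in> {0<..}"
      then have "norm (f x) \<le> K / (x+1)^2" using bd by auto
      also have "\<dots> \<le> norm (K * (1 / (x + 1)\<^sup>2))" by (simp add: abs_mult divide_simps)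
        (smt (verit) zero_le_power2)
      finally show "norm (f x) \<le> norm (K * (1 / (x + 1)\<^sup>2))" .
    qed
  qed
  show "f integrable_on {0<..}" using set_borel_integral_eq_integral(1)[OF si] .
qed

lemma denom_lb:
  fixes Z s :: complex
  assumes Z: "Z \<noteq> 0" and ns: "\<And>u. u \<ge> 0 \<Longrightarrow> s \<noteq> \<i> * Z * of_real u"
  shows "\<exists>c>0. \<forall>u\<ge>0. c * (u+1) \<le> norm (\<i> * Z * of_real u - s)"
proof -
  define r where "r = s / (\<i> * Z)"
  have sr: "s = \<i> * Z * r" using Z by (simp add: r_def)
  have nr: "norm (\<i> * Z * of_real u - s) = norm Z * norm (of_real u - r)" for u
  proof -
    have "\<i> * Z * of_real u - s = (\<i> * Z) * (of_real u - r)" by (simp add: sr algebra_simps)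
    then show ?thesis by (simp add: norm_mult)
  qed
  define e where "e = (if Im r \<noteq> 0 then \<bar>Im r\<bar> else - Re r)"
  have e0: "e > 0"
  proof (cases "Im r = 0")
    case True
    have "Re r < 0"
    proof (rule ccontr)
      assume "\<not> Re r < 0"
      then have "Re r \<ge> 0" by simp
      moreover have "r = of_real (Re r)" using True by (simp add: complex_eq_iff)
      ultimately show False using ns[of "Re r"] sr by auto
    qed
    then show ?thesis using True by (simp add: e_def)
  qed (simp add: e_def)
  have ge: "e \<le> norm (of_real u - r)" if "u \<ge> 0" for u
  proof (cases "Im r = 0")
    case True
    have "e = - Re r" using True by (simp add: e_def)
    also have "\<dots> \<le> \<bar>Re (of_real u - r)\<bar>" using that by simp
    also have "\<dots> \<le> norm (of_real u - r)" by (rule abs_Re_le_cmod)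
    finally show ?thesis .
  next
    case False
    have "e = \<bar>Im (of_real u - r)\<bar>" using False by (simp add: e_def)
    also have "\<dots> \<le> norm (of_real u - r)" by (rule abs_Im_le_cmod)
    finally show ?thesis .
  qed
  have ge2: "u - norm r \<le> norm (of_real u - r)" if "u \<ge> 0" for u
  proof -
    have "norm (complex_of_real u) - norm r \<le> norm (of_real u - r)" by (rule norm_triangle_ineq2)
    then show ?thesis using that by simp
  qed
  define c where "c = norm Z / ((1 + norm r)/e + 1)"
  have den: "(1 + norm r)/e + 1 > 0" using e0 by (simp add: add_pos_nonneg)
  have "c > 0" using Z den by (simp add: c_def)
  moreover have "c * (u+1) \<le> norm (\<i> * Z * of_real u - s)" if u: "u \<ge> 0" for u
  proof -
    define m where "m = norm (complex_of_real u - r)"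
    have m1: "e \<le> m" "u - norm r \<le> m" using ge[OF u] ge2[OF u] by (auto simp: m_def)
    have "(1 + norm r) \<le> (1 + norm r) * (m / e)" using m1 e0
      by (simp add: divide_simps) (smt (verit, ccfv_SIG) mult_left_mono norm_ge_zero)
    then have "u + 1 \<le> (1 + norm r) * (m / e) + m" using m1 by linarith
    also have "\<dots> = m * ((1 + norm r)/e + 1)" using e0 by (simp add: field_simps)
    finally have "u + 1 \<le> m * ((1 + norm r)/e + 1)" .
    then have "(u + 1) / ((1 + norm r)/e + 1) \<le> m" using den by (simp add: divide_simps)
    then have "norm Z * ((u + 1) / ((1 + norm r)/e + 1)) \<le> norm Z * m" by (rule mult_left_mono) auto
    then show ?thesis by (simp add: c_def nr m_def)
  qed
  ultimately show ?thesis by blast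
qed

lemma denom_lb2:
  fixes Z0 s0 \<alpha> \<beta> x0 :: complex
  assumes Z: "Z0 \<noteq> 0" and ns: "\<And>u. u \<ge> 0 \<Longrightarrow> s0 \<noteq> \<i> * Z0 * of_real u"
  shows "\<exists>c>0. \<exists>\<delta>>0. \<forall>x u. norm (x - x0) < \<delta> \<longrightarrow> u \<ge> 0 \<longrightarrow>
     c * (u+1) \<le> norm (\<i> * (Z0 + \<alpha> * (x - x0)) * of_real u - (s0 + \<beta> * (x - x0)))"
proof -
  obtain c0 where c0: "c0 > 0" "\<And>u. u \<ge> 0 \<Longrightarrow> c0 * (u+1) \<le> norm (\<i> * Z0 * of_real u - s0)"
    using denom_lb[OF Z ns] by blast
  define K where "K = norm \<alpha> + norm \<beta> + 1"
  have K0: "K > 0" by (simp add: K_def add_nonneg_pos)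
  define \<delta> where "\<delta> = c0 / (2 * K)"
  have d0: "\<delta> > 0" using c0 K0 by (simp add: \<delta>_def)
  have "c0/2 * (u+1) \<le> norm (\<i> * (Z0 + \<alpha> * (x - x0)) * of_real u - (s0 + \<beta> * (x - x0)))"
    if x: "norm (x - x0) < \<delta>" and u: "u \<ge> 0" for x u
  proof -
    have eq: "\<i> * (Z0 + \<alpha> * (x - x0)) * of_real u - (s0 + \<beta> * (x - x0))
        = (\<i> * Z0 * of_real u - s0) + (x - x0) * (\<i> * \<alpha> * of_real u - \<beta>)"
      by (simp add: algebra_simps)
    have "norm (\<i> * \<alpha> * of_real u - \<beta>) \<le> norm \<alpha> * u + norm \<beta>"
      using norm_triangle_ineq4[of "\<i> * \<alpha> * of_real u" \<beta>] u by (simp add: norm_mult)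
    also have "\<dots> \<le> K * (u+1)" using u by (simp add: K_def algebra_simps)
    finally have p1: "norm (\<i> * \<alpha> * of_real u - \<beta>) \<le> K * (u+1)" .
    have "norm ((x - x0) * (\<i> * \<alpha> * of_real u - \<beta>)) \<le> \<delta> * (K * (u+1))"
      unfolding norm_mult using x p1 d0 by (intro mult_mono) auto
    also have "\<dots> = c0/2 * (u+1)" using K0 by (simp add: \<delta>_def)
    finally have p2: "norm ((x - x0) * (\<i> * \<alpha> * of_real u - \<beta>)) \<le> c0/2 * (u+1)" .
    have "norm (\<i> * Z0 * of_real u - s0) - norm ((x - x0) * (\<i> * \<alpha> * of_real u - \<beta>))
       \<le> norm ((\<i> * Z0 * of_real u - s0) + (x - x0) * (\<i> * \<alpha> * of_real u - \<beta>))"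
      by (metis norm_diff_ineq)
    then show ?thesis using c0(2)[OF u] p2 unfolding eq by linarith
  qed
  then show ?thesis using c0 d0 by (intro exI[of _ "c0/2"]) auto
qed

lemma real_bound_aux:
  fixes a p t d1 d2 M K c u :: real
  assumes "0 \<le> a" "a \<le> M/(u+1)" "0 \<le> p" "p \<le> K*(u+1)" "c*(u+1) \<le> d1" "c*(u+1) \<le> d2"
    "c > 0" "u \<ge> 0" "t \<ge> 0"
  shows "a * p^2 * t / (d1 * d2^2) \<le> t * (M * K^2 / c^3) * (1/(u+1)^2)"
proof -
  have u1: "u + 1 > 0" using assms by simp
  have cu: "c*(u+1) > 0" using assms u1 by simp
  have d1: "d1 > 0" "d2 > 0" using assms cu by linarith+
  have M0: "M \<ge> 0"
  proof (rule ccontr)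
    assume "\<not> M \<ge> 0" then have "M/(u+1) < 0" using u1 by (simp add: divide_neg_pos)
    then show False using assms by linarith
  qed
  have "a * p^2 * t \<le> (M/(u+1)) * (K*(u+1))^2 * t"
    using assms M0 u1 by (intro mult_mono power_mono) auto
  also have "\<dots> = M * K^2 * (u+1) * t" using u1 by (simp add: power2_eq_square field_simps)
  finally have n: "a * p^2 * t \<le> M * K^2 * (u+1) * t" .
  have dd: "(c*(u+1)) * (c*(u+1))^2 \<le> d1 * d2^2"
    using assms u1 d1 by (intro mult_mono power_mono) auto
  have cpos: "(c*(u+1)) * (c*(u+1))^2 > 0" using assms u1 by simp
  have "a * p^2 * t / (d1 * d2^2) \<le> (M * K^2 * (u+1) * t) / ((c*(u+1)) * (c*(u+1))^2)"
    using n dd cpos assms M0 u1 by (intro frac_le) (auto intro!: mult_nonneg_nonneg)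
  also have "\<dots> = (M*K^2*t) * (u+1) / ((c^3*(u+1)^2) * (u+1))"
    by (simp add: power2_eq_square power3_eq_cube ac_simps)
  also have "\<dots> = (M*K^2*t) / (c^3*(u+1)^2)"
    using u1 by (rule nonzero_mult_divide_mult_cancel_right[OF order.strict_implies_not_eq[symmetric]])
  also have "\<dots> = t * (M * K^2 / c^3) * (1/(u+1)^2)" by simp
  finally show ?thesis .
qed


lemma env_integrable: "(\<lambda>u::real. C * (1/(u+1)^2)) integrable_on {0<..}"
  using set_borel_integral_eq_integral(1)[OF env_int] by (rule integrable_on_mult_right)

lemma alg:
  fixes a b h p f :: complex
  assumes "a \<noteq> 0" "b \<noteq> 0" "h \<noteq> 0" "a = b + h * p"
  shows "(f / a - f / b) / h + f * p / b^2 = f * p^2 * h / (a * b^2)"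
proof -
  have "(f / a - f / b) / h + f * p / b^2 = (f * (b - a) * b + f * p * h * a) / (h * a * b^2)"
    using assms(1-3) by (simp add: field_simps power2_eq_square)
  also have "f * (b - a) * b + f * p * h * a = f * p^2 * h * h"
    using assms(4) by (simp add: algebra_simps power2_eq_square)
  also have "f * p^2 * h * h / (h * a * b^2) = f * p^2 * h / (a * b^2)"
    using assms(3) by (simp add: field_simps power2_eq_square)
  finally show ?thesis .
qed

lemma int_deriv:
  fixes \<phi> :: "real \<Rightarrow> complex" and Z0 s0 \<alpha> \<beta> x0 :: complex
  assumes Z: "Z0 \<noteq> 0" and ns: "\<And>u. u \<ge> 0 \<Longrightarrow> s0 \<noteq> \<i> * Z0 * of_real u"
    and c\<phi>: "continuous_on {0<..} \<phi>" and b\<phi>: "\<And>u. u > 0 \<Longrightarrow> norm (\<phi> u) \<le> M / (u+1)"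
  defines "D \<equiv> \<lambda>x u. \<i> * (Z0 + \<alpha> * (x - x0)) * of_real u - (s0 + \<beta> * (x - x0))"
  shows "((\<lambda>x. integral {0<..} (\<lambda>u. \<phi> u / D x u)) has_field_derivative
          - integral {0<..} (\<lambda>u. \<phi> u * (\<i> * \<alpha> * of_real u - \<beta>) / (D x0 u)^2)) (at x0)"
proof -
  obtain c \<delta> where c: "c > 0" and d: "\<delta> > 0" and
    cD: "\<And>x u. norm (x - x0) < \<delta> \<Longrightarrow> u \<ge> 0 \<Longrightarrow> c * (u+1) \<le> norm (D x u)"
    using denom_lb2[OF Z ns, of x0 \<alpha> \<beta>] unfolding D_def by blast
  have Dnz: "D x u \<noteq> 0" if "norm (x - x0) < \<delta>" "u \<ge> 0" for x u
    proof -
    have "c*(u+1) > 0" using c that by simp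
    then show ?thesis using cD[OF that] by auto
  qed
  have M0: "M \<ge> 0"
  proof (rule ccontr)
    assume "\<not> M \<ge> 0" then have "M/(1+1) < 0" by simp
    then show False using b\<phi>[of 1] norm_ge_zero[of "\<phi> 1"] by linarith
  qed
  define \<psi> where "\<psi> = (\<lambda>u::real. \<i> * \<alpha> * of_real u - \<beta>)"
  define K where "K = norm \<alpha> + norm \<beta>"
  have K0: "K \<ge> 0" by (simp add: K_def)
  have bpsi: "norm (\<psi> u) \<le> K * (u+1)" if "u \<ge> 0" for u
  proof -
    have "norm (\<psi> u) \<le> norm \<alpha> * u + norm \<beta>"
      using norm_triangle_ineq4[of "\<i> * \<alpha> * of_real u" \<beta>] that by (simp add: norm_mult \<psi>_def)
    also have "\<dots> \<le> K * (u+1)" using that by (simp add: K_def algebra_simps)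
    finally show ?thesis .
  qed
  have Dx0: "D x0 u = \<i> * Z0 * of_real u - s0" for u by (simp add: D_def)
  have Dx: "D x u = D x0 u + (x - x0) * \<psi> u" for x u by (simp add: D_def \<psi>_def algebra_simps)
  have contD: "continuous_on {0<..} (D x)" for x unfolding D_def by (intro continuous_intros)
  have ig: "(\<lambda>u. \<phi> u / D x u) integrable_on {0<..}" if x: "norm (x - x0) < \<delta>" for x
  proof (rule int_ok(2)[where K="M/c"])
    show "continuous_on {0<..} (\<lambda>u. \<phi> u / D x u)"
      using Dnz[OF x] by (intro continuous_intros c\<phi> contD) auto
    fix u :: real assume u: "u > 0"
    have "norm (\<phi> u / D x u) = norm (\<phi> u) / norm (D x u)" by (simp add: norm_divide)
    also have "\<dots> \<le> (M/(u+1)) / (c*(u+1))"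
      using b\<phi>[OF u] cD[OF x, of u] u c M0 by (intro frac_le) auto
    also have "\<dots> = M / c / (u+1)^2" by (simp add: power2_eq_square)
    finally show "norm (\<phi> u / D x u) \<le> M / c / (u+1)^2" .
  qed
  have ih: "(\<lambda>u. \<phi> u * \<psi> u / (D x0 u)^2) integrable_on {0<..}"
  proof (rule int_ok(2)[where K="M*K/c^2"])
    show "continuous_on {0<..} (\<lambda>u. \<phi> u * \<psi> u / (D x0 u)^2)"
      using Dnz[of x0] d unfolding \<psi>_def by (intro continuous_intros c\<phi> contD) auto
    fix u :: real assume u: "u > 0"
    have "norm (\<phi> u * \<psi> u / (D x0 u)^2) = norm (\<phi> u) * norm (\<psi> u) / (norm (D x0 u))^2"
      by (simp add: norm_divide norm_mult norm_power)
    also have "\<dots> \<le> (M/(u+1)) * (K*(u+1)) / (c*(u+1))^2"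
      using b\<phi>[OF u] cD[of x0 u] bpsi[of u] u c d M0 K0
      by (intro frac_le mult_mono power_mono) auto
    also have "\<dots> = (M*K) * (u+1) / ((c^2*(u+1)^2) * (u+1))"
      by (simp add: power2_eq_square ac_simps)
    also have "\<dots> = M*K/c^2 / (u+1)^2"
      using u by (subst nonzero_mult_divide_mult_cancel_right) auto
    finally show "norm (\<phi> u * \<psi> u / (D x0 u)^2) \<le> M*K/c^2 / (u+1)^2" .
  qed
  define F where "F = (\<lambda>x. integral {0<..} (\<lambda>u. \<phi> u / D x u))"
  define F' where "F' = - integral {0<..} (\<lambda>u. \<phi> u * \<psi> u / (D x0 u)^2)"
  define E where "E = integral {0<..} (\<lambda>u::real. (M * K^2 / c^3) * (1/(u+1)^2))"
  have est: "norm ((F x - F x0) / (x - x0) - F') \<le> norm (x - x0) * E"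
    if x: "norm (x - x0) < \<delta>" "x \<noteq> x0" for x
  proof -
    define r where "r = (\<lambda>u. \<phi> u * (\<psi> u)^2 * (x - x0) / (D x u * (D x0 u)^2))"
    have "(F x - F x0) / (x - x0) - F' =
       integral {0<..} (\<lambda>u. (\<phi> u / D x u - \<phi> u / D x0 u) / (x - x0) + \<phi> u * \<psi> u / (D x0 u)^2)"
      unfolding F_def F'_def
      by (simp add: integral_add integral_diff ig[OF x(1)] ig[of x0] d ih integrable_diff integrable_on_divide)
    also have "\<dots> = integral {0<..} r"
    proof (rule integral_cong)
      fix u :: real assume u: "u \<in> {0<..}"
      have n1: "D x u \<noteq> 0" "D x0 u \<noteq> 0" using Dnz[OF x(1), of u] Dnz[of x0 u] d u by auto
      have n2: "x - x0 \<noteq> 0" using x by simp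
      show "(\<phi> u / D x u - \<phi> u / D x0 u) / (x - x0) + \<phi> u * \<psi> u / (D x0 u)^2 = r u"
        unfolding r_def using alg[OF n1 n2 Dx[of x u]] .
    qed
    finally have eq: "(F x - F x0) / (x - x0) - F' = integral {0<..} r" .
    have "norm (integral {0<..} r) \<le> integral {0<..} (\<lambda>u. norm (x - x0) * ((M * K^2 / c^3) * (1/(u+1)^2)))"
    proof (rule integral_norm_bound_integral)
      show "r integrable_on {0<..}"
      proof -
        have "(\<lambda>u. (\<phi> u / D x u - \<phi> u / D x0 u) / (x - x0) + \<phi> u * \<psi> u / (D x0 u)^2) integrable_on {0<..}"
          by (intro integrable_add integrable_on_divide integrable_diff ig ih) (use x d in auto)
        moreover have "\<And>u. u \<in> {0<..} \<Longrightarrow> (\<phi> u / D x u - \<phi> u / D x0 u) / (x - x0) + \<phi> u * \<psi> u / (D x0 u)^2 = r u"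
        proof -
          fix u :: real assume u: "u \<in> {0<..}"
          have n1: "D x u \<noteq> 0" "D x0 u \<noteq> 0" using Dnz[OF x(1), of u] Dnz[of x0 u] d u by auto
          have n2: "x - x0 \<noteq> 0" using x by simp
          show "(\<phi> u / D x u - \<phi> u / D x0 u) / (x - x0) + \<phi> u * \<psi> u / (D x0 u)^2 = r u"
            unfolding r_def using alg[OF n1 n2 Dx[of x u]] .
        qed
        ultimately show ?thesis by (rule integrable_eq)
      qed
      show "(\<lambda>u. norm (x - x0) * ((M * K^2 / c^3) * (1/(u+1)^2))) integrable_on {0<..}"
        using env_integrable[of "M * K^2 / c^3"] by (rule integrable_on_mult_right)
      fix u :: real assume u: "u \<in> {0<..}"
      have "norm (r u) = norm (\<phi> u) * (norm (\<psi> u))^2 * norm (x - x0) / (norm (D x u) * (norm (D x0 u))^2)"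
        by (simp add: r_def norm_divide norm_mult norm_power)
      also have "\<dots> \<le> norm (x - x0) * (M * K^2 / c^3) * (1/(u+1)^2)"
        using b\<phi>[of u] bpsi[of u] cD[OF x(1), of u] cD[of x0 u] u c d
        by (intro real_bound_aux) auto
      finally show "norm (r u) \<le> norm (x - x0) * ((M * K^2 / c^3) * (1/(u+1)^2))" by simp
    qed
    also have "\<dots> = norm (x - x0) * E" unfolding E_def by (rule integral_mult_right)
    finally show ?thesis using eq by simp
  qed
  have "((\<lambda>x. (F x - F x0) / (x - x0) - F') \<longlongrightarrow> 0) (at x0)"
  proof (rule Lim_null_comparison)
    show "\<forall>\<^sub>F x in at x0. norm ((F x - F x0) / (x - x0) - F') \<le> norm (x - x0) * E"
      unfolding eventually_at using d est by (auto simp: dist_norm intro!: exI[of _ \<delta>])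
    have "((\<lambda>x. norm (x - x0)) \<longlongrightarrow> 0) (at x0)"
      by (intro tendsto_norm_zero LIM_zero tendsto_ident_at)
    then show "((\<lambda>x. norm (x - x0) * E) \<longlongrightarrow> 0) (at x0)"
      by (rule tendsto_mult_left_zero)
  qed
  then have "((\<lambda>x. (F x - F x0) / (x - x0)) \<longlongrightarrow> F') (at x0)" by (rule LIM_zero_cancel)
  then have "(F has_field_derivative F') (at x0)" by (simp add: has_field_derivative_iff)
  then show ?thesis by (simp add: F_def F'_def \<psi>_def)
qed


lemma e_real: "exp (- (2 * of_real pi) / complex_of_real u) = of_real (exp (- 2 * pi / u))"
proof -
  have "- (2 * of_real pi) / complex_of_real u = of_real (- 2 * pi / u)" by simp
  then show ?thesis by (simp only: exp_of_real)
qed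

lemma ebounds:
  fixes u :: real assumes u: "u > 0"
  shows "exp (- 2 * pi / u) \<le> 1" "exp (- 2 * pi / u) / u \<le> 1"
proof -
  show "exp (- 2 * pi / u) \<le> 1" using u by (simp add: field_simps)
  have "1 / u < exp (2 * pi / u)"
  proof -
    have "1/u < 2 * pi / u" using u pi_gt3 by (simp add: divide_strict_right_mono)
    also have "\<dots> < 1 + 2 * pi / u" by simp
    also have "\<dots> \<le> exp (2 * pi / u)" by (rule exp_ge_add_one_self)
    finally show ?thesis .
  qed
  then have "(1/u) / exp (2 * pi / u) \<le> exp (2 * pi / u) / exp (2 * pi / u)"
    by (intro divide_right_mono) auto
  then have "(1/u) / exp (2 * pi / u) \<le> 1" by simp
  moreover have "exp (- 2 * pi / u) / u = (1/u) / exp (2 * pi / u)"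
    by (simp add: exp_minus field_simps)
  ultimately show "exp (- 2 * pi / u) / u \<le> 1" by simp
qed

lemma G_deriv: "w \<noteq> 0 \<Longrightarrow> \<i> * Z * w - t \<noteq> 0 \<Longrightarrow>
   ((\<lambda>w. w * exp (- (2 * of_real pi) / w) / (\<i> * Z * w - t)) has_field_derivative
     exp (- (2 * of_real pi) / w) * (2 * of_real pi * \<i> * Z - t * (1 + 2 * of_real pi / w)) / (\<i> * Z * w - t)^2) (at w)"
  apply (rule derivative_eq_intros refl | simp)+
  apply (simp add: field_simps power2_eq_square)
  done

lemma ibp:
  fixes Z t :: complex
  assumes Z: "Z \<noteq> 0" and ns: "\<And>u. u \<ge> 0 \<Longrightarrow> t \<noteq> \<i> * Z * of_real u"
  shows "integral {0<..} (\<lambda>u. exp (- (2 * of_real pi) / of_real u) *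
      (2 * of_real pi * \<i> * Z - t * (1 + 2 * of_real pi / of_real u)) / (\<i> * Z * of_real u - t)^2) = - \<i> / Z"
proof -
  obtain c where c: "c > 0" and cD: "\<And>u. u \<ge> 0 \<Longrightarrow> c * (u+1) \<le> norm (\<i> * Z * of_real u - t)"
    using denom_lb[OF Z ns] by blast
  have dnz: "\<i> * Z * complex_of_real u - t \<noteq> 0" if "u \<ge> 0" for u
    using ns[OF that] by auto
  define f where "f = (\<lambda>u. exp (- (2 * of_real pi) / of_real u) *
      (2 * of_real pi * \<i> * Z - t * (1 + 2 * of_real pi / of_real u)) / (\<i> * Z * of_real u - t)^2)"
  define F where "F = (\<lambda>u. of_real u * exp (- (2 * of_real pi) / of_real u) / (\<i> * Z * of_real u - t))"
  have Fd: "(F has_vector_derivative f u) (at u)" if u: "u > 0" for u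
    unfolding F_def f_def
    by (rule has_vector_derivative_real_field[OF G_deriv]) (use u dnz[of u] in auto)
  have fc: "isCont f u" if u: "u > 0" for u
    unfolding f_def using u dnz[of u] by (auto intro!: continuous_intros)
  define K where "K = (2 * pi * norm Z + norm t + 2 * pi * norm t) / c^2"
  have fb: "norm (f u) \<le> K / (u+1)^2" if u: "u > 0" for u
  proof -
    define e where "e = exp (- 2 * pi / u)"
    have e: "e \<ge> 0" "e \<le> 1" "e / u \<le> 1" using ebounds[OF u] by (auto simp: e_def)
    have num: "exp (- (2 * of_real pi) / of_real u) * (2 * of_real pi * \<i> * Z - t * (1 + 2 * of_real pi / of_real u))
       = of_real e * (2 * of_real pi * \<i> * Z) - of_real e * t - 2 * of_real pi * t * of_real (e / u)"
      unfolding e_real e_def by (simp add: algebra_simps)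
    have "norm (of_real e * (2 * of_real pi * \<i> * Z) - of_real e * t - 2 * of_real pi * t * of_real (e / u))
       \<le> e * (2 * pi * norm Z) + e * norm t + 2 * pi * norm t * (e / u)"
      using e u by (intro order.trans[OF norm_triangle_ineq4] add_mono order.trans[OF norm_triangle_ineq4])
         (auto simp: norm_mult norm_divide)
    also have "\<dots> \<le> 1 * (2 * pi * norm Z) + 1 * norm t + 2 * pi * norm t * 1"
      using e by (intro add_mono mult_left_mono mult_right_mono) auto
    finally have n1: "norm (exp (- (2 * of_real pi) / of_real u) * (2 * of_real pi * \<i> * Z - t * (1 + 2 * of_real pi / of_real u)))
       \<le> 2 * pi * norm Z + norm t + 2 * pi * norm t" unfolding num by simp
    have n2: "(c * (u+1))^2 \<le> (norm (\<i> * Z * of_real u - t))^2"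
      using cD[of u] u c by (intro power_mono) auto
    have "norm (f u) = norm (exp (- (2 * of_real pi) / of_real u) * (2 * of_real pi * \<i> * Z - t * (1 + 2 * of_real pi / of_real u)))
        / (norm (\<i> * Z * of_real u - t))^2" by (simp add: f_def norm_divide norm_power)
    also have "\<dots> \<le> (2 * pi * norm Z + norm t + 2 * pi * norm t) / (c * (u+1))^2"
      using n1 n2 c u by (intro frac_le) auto
    also have "\<dots> = K / (u+1)^2" by (simp add: K_def power_mult_distrib)
    finally show ?thesis .
  qed
  have fcon: "continuous_on {0<..} f"
    using fc by (intro continuous_at_imp_continuous_on) auto
  have si: "set_integrable lborel {0<..} f" using int_ok(1)[OF fcon fb] by auto
  have A: "(F \<longlongrightarrow> 0) (at_right 0)"
  proof (rule Lim_null_comparison)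
    show "\<forall>\<^sub>F u in at_right 0. norm (F u) \<le> u / c"
      using eventually_at_right_less[of "0::real"]
    proof eventually_elim
      case (elim u)
      then have u: "0 < u" by simp
      have e: "exp (- 2 * pi / u) \<le> 1" using ebounds(1)[of u] u by auto
      have "norm (F u) = u * exp (- 2 * pi / u) / norm (\<i> * Z * of_real u - t)"
        using u by (simp add: F_def e_real norm_divide norm_mult)
      also have "\<dots> \<le> u * 1 / (c * (u+1))"
        using e u c cD[of u] by (intro frac_le mult_left_mono) auto
      also have "\<dots> \<le> u / c" using u c by (simp add: divide_simps)
      finally show ?case .
    qed
    show "((\<lambda>u. u / c) \<longlongrightarrow> 0) (at_right 0)"
      using c by (auto intro!: tendsto_eq_intros)
  qed
  have B: "(F \<longlongrightarrow> - \<i> / Z) at_top"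
  proof -
    have h0: "((\<lambda>u. 1 / complex_of_real u) \<longlongrightarrow> 0) at_top"
      by (rule tendsto_divide_0[OF tendsto_const filterlim_of_real_at_infinity])
    have "((\<lambda>u. exp (- (2 * of_real pi) * (1 / complex_of_real u)) / (\<i> * Z - t * (1 / complex_of_real u)))
          \<longlongrightarrow> exp (- (2 * of_real pi) * 0) / (\<i> * Z - t * 0)) at_top"
      using Z by (intro tendsto_intros h0) auto
    then have lim: "((\<lambda>u. exp (- (2 * of_real pi) * (1 / complex_of_real u)) / (\<i> * Z - t * (1 / complex_of_real u)))
          \<longlongrightarrow> - \<i> / Z) at_top"
    proof -
      have "exp (- (2 * of_real pi) * 0) / (\<i> * Z - t * 0) = - \<i> / Z"
        using Z by (simp add: divide_simps)
      then show ?thesis using \<open>(_ \<longlongrightarrow> exp (- (2 * of_real pi) * 0) / (\<i> * Z - t * 0)) at_top\<close> by simp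
    qed
    have ev: "\<forall>\<^sub>F u in at_top. exp (- (2 * of_real pi) * (1 / complex_of_real u)) / (\<i> * Z - t * (1 / complex_of_real u)) = F u"
      using eventually_gt_at_top[of 0]
    proof eventually_elim
      case (elim u)
      then have "complex_of_real u \<noteq> 0" by simp
      then show ?case by (simp add: F_def field_simps)
    qed
    show ?thesis using tendsto_cong[OF ev] lim by simp
  qed
  have "(LBINT u=ereal 0..\<infinity>. f u) = - \<i> / Z - 0"
  proof (rule interval_integral_FTC_integrable[where F=F])
    show "ereal 0 < \<infinity>" by simp
    show "\<And>x. ereal 0 < ereal x \<Longrightarrow> ereal x < \<infinity> \<Longrightarrow> (F has_vector_derivative f x) (at x)"
      using Fd by simp
    show "\<And>x. ereal 0 < ereal x \<Longrightarrow> ereal x < \<infinity> \<Longrightarrow> isCont f x" using fc by simp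
    show "set_integrable lborel (einterval (ereal 0) \<infinity>) f" using si by simp
    show "((F \<circ> real_of_ereal) \<longlongrightarrow> 0) (at_right (ereal 0))"
      unfolding ereal_tendsto_simps using A .
    show "((F \<circ> real_of_ereal) \<longlongrightarrow> - \<i> / Z) (at_left \<infinity>)"
      unfolding ereal_tendsto_simps using B .
  qed
  moreover have "(LBINT u=ereal 0..\<infinity>. f u) = integral {0<..} f"
    using interval_integral_eq_integral'[of "ereal 0" \<infinity> f] si by simp
  ultimately show ?thesis unfolding f_def by simp
qed


definition ee :: "real \<Rightarrow> complex" where "ee u = exp (- (2 * of_real pi) / of_real u)"
definition phi1 :: "real \<Rightarrow> complex" where "phi1 u = ee u / of_real u"
definition phi2 :: "real \<Rightarrow> complex" where "phi2 u = (1 + 2 * of_real pi / of_real u) * ee u / of_real u"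

lemma norm_ee: "norm (ee u) = exp (- 2 * pi / u)"
  unfolding ee_def e_real by simp

lemma cont_ee: "continuous_on {0<..} ee"
  unfolding ee_def by (intro continuous_intros) auto

lemma cont_phi1: "continuous_on {0<..} phi1"
  unfolding phi1_def by (intro continuous_intros cont_ee) auto

lemma cont_phi2: "continuous_on {0<..} phi2"
  unfolding phi2_def by (intro continuous_intros cont_ee) auto

lemma ebound2:
  fixes u :: real assumes u: "u > 0"
  shows "exp (- 2 * pi / u) / u^2 \<le> 1"
proof -
  define v where "v = 2 * pi / u"
  have v: "v > 0" using u by (simp add: v_def)
  have "1 + v + v^2/2 \<le> exp v" using v by (intro exp_lower_Taylor_quadratic) simp
  then have ev: "v^2/2 < exp v" using v by simp
  have "exp (- 2 * pi / u) / u^2 = (1/u^2) / exp v" by (simp add: v_def exp_minus field_simps)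
  also have "\<dots> \<le> (v^2/2) / exp v"
  proof (rule divide_right_mono)
    have p9: "3 * 3 \<le> pi * pi" using mult_mono[of 3 pi 3 pi] pi_gt3 by auto
    have p: "2 \<le> (2*pi)^2" using p9 by (simp add: power2_eq_square)
    have "1/u^2 \<le> (2*pi)^2/u^2 / 2" using u p by (simp add: divide_simps)
    then show "1/u^2 \<le> v^2/2" by (simp add: v_def power_divide)
  qed simp
  also have "\<dots> \<le> 1" using ev by simp
  finally show ?thesis .
qed

lemma bound_phi1: "u > 0 \<Longrightarrow> norm (phi1 u) \<le> 2 / (u+1)"
proof -
  assume u: "u > 0"
  have "norm (phi1 u) * (u+1) = exp (- 2 * pi / u) + exp (- 2 * pi / u) / u"
    using u by (simp add: phi1_def norm_divide norm_ee field_simps)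
  also have "\<dots> \<le> 2" using ebounds[OF u] by linarith
  finally show ?thesis using u by (simp add: divide_simps)
qed

lemma bound_phi1': "u > 0 \<Longrightarrow> norm (phi1 u) \<le> 1"
  using ebounds(2)[of u] by (simp add: phi1_def norm_divide norm_ee)

lemma bound_ee: "u > 0 \<Longrightarrow> norm (ee u) \<le> 1"
  using ebounds(1)[of u] by (simp add: norm_ee)

lemma bound_phi2: "u > 0 \<Longrightarrow> norm (phi2 u) \<le> (2 + 4 * pi) / (u+1)"
proof -
  assume u: "u > 0"
  define e where "e = exp (- 2 * pi / u)"
  have "norm (phi2 u) * (u+1) = norm ((1 + 2 * of_real pi / of_real u) * ee u / of_real u * (of_real u + 1))"
    using u by (simp add: phi2_def norm_mult norm_divide)
  also have "(1 + 2 * of_real pi / of_real u) * ee u / of_real u * (of_real u + 1)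
     = ee u + ee u / of_real u + 2 * of_real pi * (ee u / of_real u) + 2 * of_real pi * (ee u / (of_real u)^2)"
    using u by (simp add: field_simps power2_eq_square)
  also have "norm \<dots> \<le> e + e / u + 2 * pi * (e / u) + 2 * pi * (e / u^2)"
    using u by (intro order.trans[OF norm_triangle_ineq] add_mono)
      (auto simp: norm_mult norm_divide norm_ee e_def norm_power)
  also have "\<dots> \<le> 1 + 1 + 2 * pi * 1 + 2 * pi * 1"
    using ebounds[OF u] ebound2[OF u] by (intro add_mono mult_left_mono) (auto simp: e_def)
  finally show ?thesis using u by (simp add: divide_simps)
qed

lemma bound_phi2': "u > 0 \<Longrightarrow> norm ((1 + 2 * of_real pi / of_real u) * ee u) \<le> 1 + 2 * pi"
proof -
  assume u: "u > 0"
  have n1: "norm (ee u) \<le> 1" using ebounds(1)[OF u] by (simp add: norm_ee)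
  have n2: "norm (ee u / of_real u) \<le> 1" using ebounds(2)[OF u] u by (simp add: norm_ee norm_divide)
  have "(1 + 2 * of_real pi / of_real u) * ee u = ee u + of_real (2 * pi) * (ee u / of_real u)"
    by (simp add: algebra_simps)
  also have "norm \<dots> \<le> norm (ee u) + 2 * pi * norm (ee u / of_real u)"
  proof -
    have "norm (of_real (2 * pi) * (ee u / of_real u)) = 2 * pi * norm (ee u / of_real u)"
      by (simp only: norm_mult norm_of_real) simp
    then show ?thesis using norm_triangle_ineq[of "ee u" "of_real (2 * pi) * (ee u / of_real u)"]
      by linarith
  qed
  also have "\<dots> \<le> 1 + 2 * pi * 1"
    using n1 n2 by (intro add_mono mult_left_mono) auto
  finally show ?thesis by simp
qed

lemma int_sq:
  fixes Z t :: complex and g :: "real \<Rightarrow> complex"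
  assumes Z: "Z \<noteq> 0" and ns: "\<And>u. u \<ge> 0 \<Longrightarrow> t \<noteq> \<i> * Z * of_real u"
    and cg: "continuous_on {0<..} g" and bg: "\<And>u. u > 0 \<Longrightarrow> norm (g u) \<le> A"
  shows "(\<lambda>u. g u / (\<i> * Z * of_real u - t)^2) integrable_on {0<..}"
proof -
  obtain c where c: "c > 0" and cD: "\<And>u. u \<ge> 0 \<Longrightarrow> c * (u+1) \<le> norm (\<i> * Z * of_real u - t)"
    using denom_lb[OF Z ns] by blast
  have dnz: "\<i> * Z * complex_of_real u - t \<noteq> 0" if "u \<ge> 0" for u
    using ns[OF that] by auto
  show ?thesis
  proof (rule int_ok(2)[where K="A/c^2"])
    show "continuous_on {0<..} (\<lambda>u. g u / (\<i> * Z * of_real u - t)^2)"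
      using dnz by (intro continuous_intros cg) auto
    fix u :: real assume u: "u > 0"
    have A0: "A \<ge> 0" using bg[OF u] norm_ge_zero[of "g u"] by linarith
    have "norm (g u / (\<i> * Z * of_real u - t)^2) = norm (g u) / (norm (\<i> * Z * of_real u - t))^2"
      by (simp add: norm_divide norm_power)
    also have "\<dots> \<le> A / (c * (u+1))^2"
      using bg[OF u] cD[of u] u c A0 by (intro frac_le power_mono) auto
    also have "\<dots> = A/c^2 / (u+1)^2" by (simp add: power_mult_distrib)
    finally show "norm (g u / (\<i> * Z * of_real u - t)^2) \<le> A/c^2 / (u+1)^2" .
  qed
qed

lemma int_lin:
  fixes Z t :: complex and g :: "real \<Rightarrow> complex"
  assumes Z: "Z \<noteq> 0" and ns: "\<And>u. u \<ge> 0 \<Longrightarrow> t \<noteq> \<i> * Z * of_real u"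
    and cg: "continuous_on {0<..} g" and bg: "\<And>u. u > 0 \<Longrightarrow> norm (g u) \<le> A / (u+1)"
  shows "(\<lambda>u. g u / (\<i> * Z * of_real u - t)) integrable_on {0<..}"
proof -
  obtain c where c: "c > 0" and cD: "\<And>u. u \<ge> 0 \<Longrightarrow> c * (u+1) \<le> norm (\<i> * Z * of_real u - t)"
    using denom_lb[OF Z ns] by blast
  have dnz: "\<i> * Z * complex_of_real u - t \<noteq> 0" if "u \<ge> 0" for u
    using ns[OF that] by auto
  show ?thesis
  proof (rule int_ok(2)[where K="A/c"])
    show "continuous_on {0<..} (\<lambda>u. g u / (\<i> * Z * of_real u - t))"
      using dnz by (intro continuous_intros cg) auto
    fix u :: real assume u: "u > 0"
    have A0: "A \<ge> 0"
    proof (rule ccontr)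
      assume "\<not> A \<ge> 0" then have "A / (u+1) < 0" using u by (simp add: divide_neg_pos)
      then show False using bg[OF u] norm_ge_zero[of "g u"] by linarith
    qed
    have "norm (g u / (\<i> * Z * of_real u - t)) = norm (g u) / norm (\<i> * Z * of_real u - t)"
      by (simp add: norm_divide)
    also have "\<dots> \<le> (A / (u+1)) / (c * (u+1))"
      using bg[OF u] cD[of u] u c A0 by (intro frac_le) auto
    also have "\<dots> = A/c / (u+1)^2" by (simp add: power2_eq_square)
    finally show "norm (g u / (\<i> * Z * of_real u - t)) \<le> A/c / (u+1)^2" .
  qed
qed


lemma deriv_s:
  fixes \<phi> :: "real \<Rightarrow> complex" and Z t :: complex
  assumes Z: "Z \<noteq> 0" and ns: "\<And>u. u \<ge> 0 \<Longrightarrow> t \<noteq> \<i> * Z * of_real u"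
    and c\<phi>: "continuous_on {0<..} \<phi>" and b\<phi>: "\<And>u. u > 0 \<Longrightarrow> norm (\<phi> u) \<le> M / (u+1)"
  shows "((\<lambda>x. integral {0<..} (\<lambda>u. \<phi> u / (\<i> * Z * of_real u - x))) has_field_derivative
          integral {0<..} (\<lambda>u. \<phi> u / (\<i> * Z * of_real u - t)^2)) (at t)"
proof -
  have "((\<lambda>x. integral {0<..} (\<lambda>u. \<phi> u / (\<i> * (Z + 0 * (x - t)) * of_real u - (t + 1 * (x - t))))) has_field_derivative
          - integral {0<..} (\<lambda>u. \<phi> u * (\<i> * 0 * of_real u - 1) / (\<i> * (Z + 0 * (t - t)) * of_real u - (t + 1 * (t - t)))^2)) (at t)"
    by (rule int_deriv[OF Z ns c\<phi> b\<phi>])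
  then show ?thesis by simp
qed

lemma deriv_Z:
  fixes \<phi> :: "real \<Rightarrow> complex" and Z t q w0 :: complex
  assumes Z: "Z \<noteq> 0" and ns: "\<And>u. u \<ge> 0 \<Longrightarrow> t \<noteq> \<i> * Z * of_real u"
    and c\<phi>: "continuous_on {0<..} \<phi>" and b\<phi>: "\<And>u. u > 0 \<Longrightarrow> norm (\<phi> u) \<le> M / (u+1)"
  shows "((\<lambda>w. integral {0<..} (\<lambda>u. \<phi> u / (\<i> * (Z + q * (w - w0)) * of_real u - t))) has_field_derivative
          - (\<i> * q) * integral {0<..} (\<lambda>u. \<phi> u * of_real u / (\<i> * Z * of_real u - t)^2)) (at w0)"
proof -
  have "((\<lambda>w. integral {0<..} (\<lambda>u. \<phi> u / (\<i> * (Z + q * (w - w0)) * of_real u - (t + 0 * (w - w0))))) has_field_derivative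
          - integral {0<..} (\<lambda>u. \<phi> u * (\<i> * q * of_real u - 0) / (\<i> * (Z + q * (w0 - w0)) * of_real u - (t + 0 * (w0 - w0)))^2)) (at w0)"
    by (rule int_deriv[OF Z ns c\<phi> b\<phi>])
  moreover have "- integral {0<..} (\<lambda>u. \<phi> u * (\<i> * q * of_real u - 0) / (\<i> * (Z + q * (w0 - w0)) * of_real u - (t + 0 * (w0 - w0)))^2)
     = - (\<i> * q) * integral {0<..} (\<lambda>u. \<phi> u * of_real u / (\<i> * Z * of_real u - t)^2)"
  proof -
    have "integral {0<..} (\<lambda>u. \<phi> u * (\<i> * q * of_real u - 0) / (\<i> * (Z + q * (w0 - w0)) * of_real u - (t + 0 * (w0 - w0)))^2)
       = integral {0<..} (\<lambda>u. (\<i> * q) * (\<phi> u * of_real u / (\<i> * Z * of_real u - t)^2))"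
      by (rule integral_cong) (simp add: algebra_simps)
    also have "\<dots> = (\<i> * q) * integral {0<..} (\<lambda>u. \<phi> u * of_real u / (\<i> * Z * of_real u - t)^2)"
      by (rule integral_mult_right)
    finally show ?thesis by simp
  qed
  moreover have "(\<lambda>w. integral {0<..} (\<lambda>u. \<phi> u / (\<i> * (Z + q * (w - w0)) * of_real u - (t + 0 * (w - w0)))))
      = (\<lambda>w. integral {0<..} (\<lambda>u. \<phi> u / (\<i> * (Z + q * (w - w0)) * of_real u - t)))" by simp
  ultimately show ?thesis by metis
qed

lemma alg2:
  fixes d w t Z e :: complex
  assumes "d \<noteq> 0" "w \<noteq> 0" "d + t = \<i> * Z * w"
  shows "(e / w) / d + t * ((e / w) / d^2) = \<i> * Z * (e / d^2)"
proof -
  have "(e / w) / d + t * ((e / w) / d^2) = (e / w) * (d + t) / d^2"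
    using assms(1,2) by (simp add: field_simps power2_eq_square)
  also have "\<dots> = \<i> * Z * (e / d^2)" unfolding assms(3) using assms(2) by (simp add: field_simps)
  finally show ?thesis .
qed

lemma alg3:
  fixes E A t B D :: complex
  shows "E * (A - t * B) / D = A * (E / D) - t * (B * E / D)"
  by (simp add: divide_inverse algebra_simps)

lemma key_identity:
  fixes Z t :: complex
  assumes Z: "Z \<noteq> 0" and ns: "\<And>u. u \<ge> 0 \<Longrightarrow> t \<noteq> \<i> * Z * of_real u"
  defines "H1 \<equiv> integral {0<..} (\<lambda>u. phi1 u / (\<i> * Z * of_real u - t))"
    and "H1' \<equiv> integral {0<..} (\<lambda>u. phi1 u / (\<i> * Z * of_real u - t)^2)"
    and "J2 \<equiv> integral {0<..} (\<lambda>u. phi2 u * of_real u / (\<i> * Z * of_real u - t)^2)"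
  shows "(- (\<i> * t * J2) - 1 / Z) / (4 * of_real pi ^ 2) = (H1 + t * H1') / (2 * of_real pi * \<i>)"
proof -
  have dnz: "\<i> * Z * complex_of_real u - t \<noteq> 0" if "u \<ge> 0" for u
    using ns[OF that] by auto
  define J1 where "J1 = integral {0<..} (\<lambda>u. ee u / (\<i> * Z * of_real u - t)^2)"
  define J2' where "J2' = integral {0<..} (\<lambda>u. (1 + 2 * of_real pi / of_real u) * ee u / (\<i> * Z * of_real u - t)^2)"
  have i1: "(\<lambda>u. phi1 u / (\<i> * Z * of_real u - t)) integrable_on {0<..}"
    by (rule int_lin[OF Z ns cont_phi1 bound_phi1])
  have i2: "(\<lambda>u. phi1 u / (\<i> * Z * of_real u - t)^2) integrable_on {0<..}"
    by (rule int_sq[OF Z ns cont_phi1 bound_phi1'])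
  have i3: "(\<lambda>u. ee u / (\<i> * Z * of_real u - t)^2) integrable_on {0<..}"
    by (rule int_sq[OF Z ns cont_ee bound_ee])
  have i4: "(\<lambda>u. (1 + 2 * of_real pi / of_real u) * ee u / (\<i> * Z * of_real u - t)^2) integrable_on {0<..}"
  proof (rule int_sq[OF Z ns _ bound_phi2'])
    show "continuous_on {0<..} (\<lambda>u. (1 + 2 * of_real pi / of_real u) * ee u)"
      by (intro continuous_intros cont_ee) auto
  qed auto
  have "H1 + t * H1' = integral {0<..} (\<lambda>u. phi1 u / (\<i> * Z * of_real u - t) + t * (phi1 u / (\<i> * Z * of_real u - t)^2))"
    unfolding H1_def H1'_def
    by (simp only: integral_add[OF i1 integrable_on_mult_right[OF i2]] integral_mult_right)
  also have "\<dots> = integral {0<..} (\<lambda>u. (\<i> * Z) * (ee u / (\<i> * Z * of_real u - t)^2))"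
  proof (rule integral_cong)
    fix u :: real assume u: "u \<in> {0<..}"
    have d: "\<i> * Z * complex_of_real u - t \<noteq> 0" using dnz[of u] u by auto
    have u0: "complex_of_real u \<noteq> 0" using u by auto
    show "phi1 u / (\<i> * Z * of_real u - t) + t * (phi1 u / (\<i> * Z * of_real u - t)^2) =
       (\<i> * Z) * (ee u / (\<i> * Z * of_real u - t)^2)"
      unfolding phi1_def by (rule alg2[OF d u0]) simp
  qed
  also have "\<dots> = \<i> * Z * J1" unfolding J1_def by (rule integral_mult_right)
  finally have HH: "H1 + t * H1' = \<i> * Z * J1" .
  have JJ: "J2 = J2'" unfolding J2_def J2'_def
  proof (rule integral_cong)
    fix u :: real assume u: "u \<in> {0<..}"
    have u0: "complex_of_real u \<noteq> 0" using u by auto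
    show "phi2 u * of_real u / (\<i> * Z * of_real u - t)^2 = (1 + 2 * of_real pi / of_real u) * ee u / (\<i> * Z * of_real u - t)^2"
      unfolding phi2_def using u0 by simp
  qed
  have "- \<i> / Z = integral {0<..} (\<lambda>u. exp (- (2 * of_real pi) / of_real u) *
      (2 * of_real pi * \<i> * Z - t * (1 + 2 * of_real pi / of_real u)) / (\<i> * Z * of_real u - t)^2)"
    using ibp[OF Z ns] by simp
  also have "\<dots> = integral {0<..} (\<lambda>u. (2 * of_real pi * \<i> * Z) * (ee u / (\<i> * Z * of_real u - t)^2)
       - t * ((1 + 2 * of_real pi / of_real u) * ee u / (\<i> * Z * of_real u - t)^2))"
    by (rule integral_cong) (unfold ee_def, rule alg3)
  also have "\<dots> = 2 * of_real pi * \<i> * Z * J1 - t * J2'"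
    unfolding J1_def J2'_def
    by (simp only: integral_diff[OF integrable_on_mult_right[OF i3] integrable_on_mult_right[OF i4]] integral_mult_right)
  finally have IB: "- \<i> / Z = 2 * of_real pi * \<i> * Z * J1 - t * J2" using JJ by simp
  then have tJ: "t * J2 = 2 * of_real pi * \<i> * Z * J1 + \<i> / Z" by (simp add: algebra_simps)
  have pi0: "complex_of_real pi \<noteq> 0" by simp
  have "- (\<i> * t * J2) - 1 / Z = - \<i> * (t * J2) - 1 / Z" by simp
  also have "\<dots> = 2 * of_real pi * Z * J1" unfolding tJ using Z
    by (simp add: algebra_simps)
  finally have L: "- (\<i> * t * J2) - 1 / Z = 2 * of_real pi * Z * J1" .
  show ?thesis unfolding L HH using pi0
    by (simp add: field_simps power2_eq_square)
qed


lemma log_branch_deriv: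
  fixes l h :: "complex \<Rightarrow> complex"
  assumes V: "open V" "x0 \<in> V" and el: "\<And>w. w \<in> V \<Longrightarrow> exp (l w) = h w"
    and hd: "(h has_field_derivative h') (at x0)" and h0: "h x0 \<noteq> 0"
    and lc: "isCont l x0"
  shows "(l has_field_derivative h' / h x0) (at x0)"
proof -
  define M where "M = (\<lambda>w. Ln (h w / h x0) + l x0)"
  have hc: "isCont h x0" using hd by (rule DERIV_isCont)
  have Md: "(M has_field_derivative h' / h x0) (at x0)"
  proof -
    have kd: "((\<lambda>x. h x / h x0) has_field_derivative h' / h x0) (at x0)"
      using hd by (rule DERIV_cdivide)
    have "(Ln has_field_derivative inverse (h x0 / h x0)) (at (h x0 / h x0))"
      using h0 by (intro has_field_derivative_Ln) auto
    then have "((\<lambda>w. Ln (h w / h x0)) has_field_derivative inverse (h x0 / h x0) * (h' / h x0)) (at x0)"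
      by (rule DERIV_chain'[OF kd])
    from DERIV_add[OF this DERIV_const[of "l x0"]]
    have "((\<lambda>w. Ln (h w / h x0) + l x0) has_field_derivative inverse (h x0 / h x0) * (h' / h x0) + 0) (at x0)" .
    then show ?thesis using h0 by (simp add: M_def)
  qed
  have Mc: "isCont M x0" using Md by (rule DERIV_isCont)
  have M0: "M x0 = l x0" using h0 by (simp add: M_def)
  have "isCont (\<lambda>w. l w - M w) x0" using lc Mc by (intro continuous_intros)
  then have "((\<lambda>w. l w - M w) \<longlongrightarrow> (\<lambda>w. l w - M w) x0) (nhds x0)"
    using tendsto_at_iff_tendsto_nhds[of "\<lambda>w. l w - M w" x0] unfolding isCont_def by blast
  then have "((\<lambda>w. l w - M w) \<longlongrightarrow> 0) (nhds x0)" using M0 by simp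
  then have "((\<lambda>w. norm (l w - M w)) \<longlongrightarrow> 0) (nhds x0)" by (rule tendsto_norm_zero)
  then have ev1: "\<forall>\<^sub>F w in nhds x0. norm (l w - M w) < 2 * pi"
    by (rule order_tendstoD) simp
  have "(h \<longlongrightarrow> h x0) (nhds x0)"
    using hc tendsto_at_iff_tendsto_nhds[of h x0] unfolding isCont_def by blast
  then have ev2: "\<forall>\<^sub>F w in nhds x0. h w \<noteq> 0"
    using h0 by (rule tendsto_imp_eventually_ne)
  have ev3: "\<forall>\<^sub>F w in nhds x0. w \<in> V" using V by (rule eventually_nhds_in_open)
  have ev: "\<forall>\<^sub>F w in nhds x0. l w = M w"
    using ev1 ev2 ev3
  proof eventually_elim
    case (elim w)
    have "exp (M w) = h w / h x0 * exp (l x0)"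
      using elim h0 by (simp add: M_def exp_add)
    also have "\<dots> = h w" using el[OF V(2)] h0 by simp
    also have "\<dots> = exp (l w)" using el[OF elim(3)] by simp
    finally obtain n :: int where n: "l w = M w + (of_int (2 * n) * pi) * \<i>"
      using exp_eq by metis
    have "norm (l w - M w) = \<bar>2 * n\<bar> * pi" using n by (simp add: norm_mult)
    then have "\<bar>2 * real_of_int n\<bar> * pi < 2 * pi" using elim(1) by simp
    then have "\<bar>real_of_int n\<bar> < 1" by simp
    then have "n = 0" by linarith
    then show ?case using n by simp
  qed
  show ?thesis using Md DERIV_cong_ev[OF refl ev refl] by simp
qed


lemma Zc_upd: "Zc (z(b := w)) g = Zc z g + of_int (g b) * (w - z b)"
proof -
  have "Zc (z(b := w)) g = (\<Sum>a\<in>UNIV. of_int (g a) * z a + (if a = b then of_int (g b) * (w - z b) else 0))"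
    unfolding Zc_def by (rule sum.cong) (auto simp: algebra_simps)
  also have "\<dots> = Zc z g + of_int (g b) * (w - z b)"
    by (simp add: sum.distrib Zc_def)
  finally show ?thesis .
qed

lemma pair_basis: "pair \<omega> (basis_charge a) g = (\<Sum>b\<in>UNIV. \<omega> a b * g b)"
proof -
  have "\<And>a'. (\<Sum>b\<in>UNIV. basis_charge a a' * g b * \<omega> a' b) = (if a' = a then (\<Sum>b\<in>UNIV. \<omega> a b * g b) else 0)"
    by (auto simp: basis_charge_def mult.commute)
  then show ?thesis unfolding pair_def by simp
qed

lemma not_on_ray:
  assumes "t \<noteq> 0" "t \<notin> ray Z" "u \<ge> 0"
  shows "t \<noteq> \<i> * Z * of_real u"
proof
  assume tz: "t = \<i> * Z * of_real u"
  show False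
  proof (cases "u = 0")
    case True then show False using tz assms by simp
  next
    case False
    then have u: "u > 0" using assms by simp
    have "\<i> * Z * of_real u = \<i> * Z / of_real (1/u)" using u by simp
    then have "t \<in> ray Z" unfolding ray_def using tz u by (intro CollectI exI[of _ "1/u"]) auto
    then show False using assms by simp
  qed
qed

lemma Xsf_nz:
  assumes "quad_refinement \<omega> \<sigma>"
  shows "Xsf \<sigma> \<theta> z g s \<noteq> 0"
proof -
  have "\<sigma> g \<in> {-1, 1}" using assms by (simp add: quad_refinement_def)
  then have "\<sigma> g \<noteq> 0" by auto
  then show ?thesis by (simp add: Xsf_def)
qed


lemma ray_int_X:
  fixes Z s \<Theta> :: complex and sg :: int
  assumes Z: "Z \<noteq> 0"
  shows "ray_int Z (\<lambda>t'. s / (t' - s) * (of_int sg * exp (2 * pi * \<i> * (\<Theta> - Z / t'))))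
     = (of_int sg * exp (2 * pi * \<i> * \<Theta>)) * (s * integral {0<..} (\<lambda>u. phi1 u / (\<i> * Z * of_real u - s)))"
proof -
  have "ray_int Z (\<lambda>t'. s / (t' - s) * (of_int sg * exp (2 * pi * \<i> * (\<Theta> - Z / t'))))
      = integral {0<..} (\<lambda>u. (of_int sg * exp (2 * pi * \<i> * \<Theta>)) * (s * (phi1 u / (\<i> * Z * of_real u - s))))"
    unfolding ray_int_def
  proof (rule integral_cong)
    fix u :: real assume u: "u \<in> {0<..}"
    then have u0: "complex_of_real u \<noteq> 0" by simp
    have "2 * pi * \<i> * (\<Theta> - Z / (\<i> * Z * of_real u)) = 2 * pi * \<i> * \<Theta> + (- (2 * of_real pi) / of_real u)"
      using Z u0 by (simp add: field_simps)
    then have "exp (2 * pi * \<i> * (\<Theta> - Z / (\<i> * Z * of_real u))) = exp (2 * pi * \<i> * \<Theta> + (- (2 * of_real pi) / of_real u))"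
      by (rule arg_cong)
    also have "\<dots> = exp (2 * pi * \<i> * \<Theta>) * ee u" unfolding ee_def by (rule exp_add)
    finally have "exp (2 * pi * \<i> * (\<Theta> - Z / (\<i> * Z * of_real u))) = exp (2 * pi * \<i> * \<Theta>) * ee u" .
    then show "s / (\<i> * Z * of_real u - s) * (of_int sg * exp (2 * pi * \<i> * (\<Theta> - Z / (\<i> * Z * of_real u)))) / of_real u
       = (of_int sg * exp (2 * pi * \<i> * \<Theta>)) * (s * (phi1 u / (\<i> * Z * of_real u - s)))"
      unfolding \<open>exp (2 * pi * \<i> * (\<Theta> - Z / (\<i> * Z * of_real u))) = exp (2 * pi * \<i> * \<Theta>) * ee u\<close>
      by (simp add: phi1_def mult_ac)
  qed
  also have "\<dots> = (of_int sg * exp (2 * pi * \<i> * \<Theta>)) * (s * integral {0<..} (\<lambda>u. phi1 u / (\<i> * Z * of_real u - s)))"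
    by (simp only: integral_mult_right)
  finally show ?thesis .
qed

lemma ray_int_tau:
  fixes Z t :: complex
  assumes Z: "Z \<noteq> 0"
  shows "ray_int Z (\<lambda>t'. t / (t' - t) * (1 + 2 * pi * \<i> * Z / t') * exp (- 2 * pi * \<i> * Z / t'))
     = t * integral {0<..} (\<lambda>u. phi2 u / (\<i> * Z * of_real u - t))"
proof -
  have "ray_int Z (\<lambda>t'. t / (t' - t) * (1 + 2 * pi * \<i> * Z / t') * exp (- 2 * pi * \<i> * Z / t'))
      = integral {0<..} (\<lambda>u. t * (phi2 u / (\<i> * Z * of_real u - t)))"
    unfolding ray_int_def
  proof (rule integral_cong)
    fix u :: real assume u: "u \<in> {0<..}"
    then have u0: "complex_of_real u \<noteq> 0" by simp
    have a: "2 * pi * \<i> * Z / (\<i> * Z * of_real u) = 2 * of_real pi / of_real u"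
      using Z u0 by (simp add: field_simps)
    have b: "- 2 * pi * \<i> * Z / (\<i> * Z * of_real u) = - (2 * of_real pi) / of_real u"
      using Z u0 by (simp add: field_simps)
    show "t / (\<i> * Z * of_real u - t) * (1 + 2 * pi * \<i> * Z / (\<i> * Z * of_real u)) * exp (- 2 * pi * \<i> * Z / (\<i> * Z * of_real u)) / of_real u
       = t * (phi2 u / (\<i> * Z * of_real u - t))"
      unfolding a b by (simp add: phi2_def ee_def mult_ac)
  qed
  also have "\<dots> = t * integral {0<..} (\<lambda>u. phi2 u / (\<i> * Z * of_real u - t))"
    by (rule integral_mult_right)
  finally show ?thesis .
qed


lemma X_deriv:
  assumes Z: "Zc z g' \<noteq> 0" and ns: "\<And>u. u \<ge> 0 \<Longrightarrow> t \<noteq> \<i> * Zc z g' * of_real u"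
  shows "deriv (\<lambda>s. X_term \<omega> \<sigma> \<Omega> \<theta> z g g' s) t =
    of_rat (\<Omega> g') * of_int (pair \<omega> g g') * (of_int (\<sigma> g') * exp (2 * pi * \<i> * Zc \<theta> g')) *
    (integral {0<..} (\<lambda>u. phi1 u / (\<i> * Zc z g' * of_real u - t)) +
     t * integral {0<..} (\<lambda>u. phi1 u / (\<i> * Zc z g' * of_real u - t)^2))"
proof -
  define K where "K = of_rat (\<Omega> g') * of_int (pair \<omega> g g') * (of_int (\<sigma> g') * exp (2 * pi * \<i> * Zc \<theta> g'))"
  define H where "H = (\<lambda>s. integral {0<..} (\<lambda>u. phi1 u / (\<i> * Zc z g' * of_real u - s)))"
  have eq: "(\<lambda>s. X_term \<omega> \<sigma> \<Omega> \<theta> z g g' s) = (\<lambda>s. K * (s * H s))"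
    unfolding X_term_def Xsf_def ray_int_X[OF Z] K_def H_def by (simp add: mult_ac)
  have Hd: "(H has_field_derivative integral {0<..} (\<lambda>u. phi1 u / (\<i> * Zc z g' * of_real u - t)^2)) (at t)"
    unfolding H_def by (rule deriv_s[OF Z ns cont_phi1 bound_phi1])
  have "((\<lambda>s. K * (s * H s)) has_field_derivative K * (1 * H t + integral {0<..} (\<lambda>u. phi1 u / (\<i> * Zc z g' * of_real u - t)^2) * t)) (at t)"
    by (intro DERIV_cmult DERIV_mult DERIV_ident Hd)
  then show ?thesis unfolding eq by (intro DERIV_imp_deriv) (simp add: K_def H_def mult_ac)
qed

lemma tau_deriv:
  fixes U :: "('m::finite \<Rightarrow> complex) set"
  assumes U: "open U" "z \<in> U" and Znz: "\<forall>w\<in>U. Zc w g \<noteq> 0"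
    and ns: "\<And>u. u \<ge> 0 \<Longrightarrow> t \<noteq> \<i> * Zc z g * of_real u" and t0: "t \<noteq> 0"
    and Lc: "continuous_on U (L g)" and Le: "\<forall>w\<in>U. exp (L g w) = Zc w g / t"
  shows "deriv (\<lambda>w. tau_term \<sigma> \<Omega> \<theta> t L g (z(b := w))) (z b) =
    of_int (\<sigma> g) * of_rat (\<Omega> g) * exp (2 * pi * \<i> * Zc \<theta> g) *
    (t * (- (\<i> * of_int (g b)) * integral {0<..} (\<lambda>u. phi2 u * of_real u / (\<i> * Zc z g * of_real u - t)^2))
     - of_int (g b) / Zc z g)"
proof -
  define Z where "Z = Zc z g"
  define q :: complex where "q = of_int (g b)"
  define C where "C = of_int (\<sigma> g) * of_rat (\<Omega> g) * exp (2 * pi * \<i> * Zc \<theta> g)"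
  define J2 where "J2 = integral {0<..} (\<lambda>u. phi2 u * of_real u / (\<i> * Z * of_real u - t)^2)"
  define upd where "upd = (\<lambda>w. z(b := w))"
  define V where "V = upd -` U"
  have Z0: "Z \<noteq> 0" using Znz U by (simp add: Z_def)
  have cupd: "continuous_on UNIV upd"
    unfolding upd_def
  proof (intro continuous_on_coordinatewise_then_product)
    fix i show "continuous_on UNIV (\<lambda>w. (z(b := w)) i)" by (cases "i = b") auto
  qed
  have oV: "open V"
    using cupd U(1) unfolding V_def continuous_on_open_vimage[OF open_UNIV] by auto
  have zV: "z b \<in> V" using U by (simp add: V_def upd_def)
  define f where "f = (\<lambda>w. C * (t * integral {0<..} (\<lambda>u. phi2 u / (\<i> * (Z + q * (w - z b)) * of_real u - t))
        - L g (z(b := w))))"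
  have feq: "f w = tau_term \<sigma> \<Omega> \<theta> t L g (z(b := w))" if w: "w \<in> V" for w
  proof -
    have wU: "z(b := w) \<in> U" using w by (simp add: V_def upd_def)
    then have nz: "Zc (z(b := w)) g \<noteq> 0" using Znz by simp
    show ?thesis unfolding tau_term_def ray_int_tau[OF nz] f_def C_def
      by (simp add: Zc_upd Z_def q_def)
  qed
  have Hd: "((\<lambda>w. integral {0<..} (\<lambda>u. phi2 u / (\<i> * (Z + q * (w - z b)) * of_real u - t))) has_field_derivative
      - (\<i> * q) * J2) (at (z b))"
    unfolding J2_def using ns by (intro deriv_Z[OF Z0 _ cont_phi2 bound_phi2]) (simp add: Z_def)
  have lc: "isCont (\<lambda>w. L g (z(b := w))) (z b)"
  proof -
    have "continuous_on V (L g \<circ> upd)"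
      by (rule continuous_on_compose) (auto intro: continuous_on_subset[OF cupd] continuous_on_subset[OF Lc] simp: V_def)
    then show ?thesis using oV zV continuous_on_eq_continuous_at by (auto simp: o_def upd_def)
  qed
  have hd: "((\<lambda>w. Zc (z(b := w)) g / t) has_field_derivative q / t) (at (z b))"
  proof -
    have "((\<lambda>w. (Z + q * (w - z b)) / t) has_field_derivative q / t) (at (z b))"
      using t0 by (auto intro!: derivative_eq_intros)
    then show ?thesis by (simp add: Zc_upd Z_def q_def)
  qed
  have Ld: "((\<lambda>w. L g (z(b := w))) has_field_derivative (q / t) / (Zc (z(b := z b)) g / t)) (at (z b))"
  proof (rule log_branch_deriv[OF oV zV _ hd _ lc])
    show "\<And>w. w \<in> V \<Longrightarrow> exp (L g (z(b := w))) = Zc (z(b := w)) g / t"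
      using Le by (auto simp: V_def upd_def)
    show "Zc (z(b := z b)) g / t \<noteq> 0" using Z0 t0 by (simp add: Z_def)
  qed
  have qZ: "(q / t) / (Zc (z(b := z b)) g / t) = q / Z" using t0 by (simp add: Z_def)
  have "(f has_field_derivative C * (t * (- (\<i> * q) * J2) - q / Z)) (at (z b))"
    unfolding f_def using Ld unfolding qZ by (intro DERIV_cmult DERIV_diff DERIV_cmult Hd)
  then have "((\<lambda>w. tau_term \<sigma> \<Omega> \<theta> t L g (z(b := w))) has_field_derivative C * (t * (- (\<i> * q) * J2) - q / Z)) (at (z b))"
    by (rule has_field_derivative_transform_within_open[OF _ oV zV feq])
  then show ?thesis unfolding C_def J2_def q_def Z_def by (rule DERIV_imp_deriv)
qed


lemma has_sum_finsum:
  fixes f :: "'b \<Rightarrow> 'a \<Rightarrow> complex"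
  assumes "finite B" "\<And>b. b \<in> B \<Longrightarrow> (f b has_sum S b) A"
  shows "((\<lambda>x. \<Sum>b\<in>B. f b x) has_sum (\<Sum>b\<in>B. S b)) A"
  using assms
proof (induction B rule: finite_induct)
  case empty then show ?case by simp
next
  case (insert b B)
  then show ?case by (simp add: has_sum_add)
qed

lemma key_final:
  fixes Z t J2 H1 H1' C Pc q :: complex
  assumes KI: "(- (\<i> * t * J2) - 1 / Z) / (4 * of_real pi ^ 2) = (H1 + t * H1') / (2 * of_real pi * \<i>)"
  shows "of_real (1 / (4 * pi^2)) * (C * Pc * (- (\<i> * t * J2) - 1 / Z))
       = 1 / (complex_of_real (2 * pi) * \<i>) * (Pc * C * (H1 + t * H1'))"
proof -
  have "of_real (1 / (4 * pi^2)) * (C * Pc * (- (\<i> * t * J2) - 1 / Z))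
      = C * Pc * ((- (\<i> * t * J2) - 1 / Z) / (4 * of_real pi ^ 2))" by simp
  also have "\<dots> = C * Pc * ((H1 + t * H1') / (2 * of_real pi * \<i>))" unfolding KI ..
  also have "\<dots> = 1 / (complex_of_real (2 * pi) * \<i>) * (Pc * C * (H1 + t * H1'))" by simp
  finally show ?thesis .
qed

theorem mainTheorem5:
  fixes \<omega> :: "'m::finite \<Rightarrow> 'm \<Rightarrow> int"
    and \<sigma> :: "('m \<Rightarrow> int) \<Rightarrow> int"
    and \<Omega> :: "('m \<Rightarrow> int) \<Rightarrow> rat"
    and z \<theta> :: "'m \<Rightarrow> complex"
    and U :: "('m \<Rightarrow> complex) set"
    and t :: complex
    and L :: "('m \<Rightarrow> int) \<Rightarrow> ('m \<Rightarrow> complex) \<Rightarrow> complex"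
  assumes skew: "\<forall>a b. \<omega> a b = - \<omega> b a"
    and inv: "invertible ((\<chi> a b. real_of_int (\<omega> a b)) :: real^'m^'m)"
    and qr: "quad_refinement \<omega> \<sigma>"
    and U: "open U" "z \<in> U"
    and Znz: "\<forall>g\<in>Gstar. \<Omega> g \<noteq> 0 \<longrightarrow> (\<forall>w\<in>U. Zc w g \<noteq> 0)"
    and uncoupled: "\<forall>g\<in>Gstar. \<forall>g'\<in>Gstar. \<Omega> g \<noteq> 0 \<longrightarrow> \<Omega> g' \<noteq> 0 \<longrightarrow> pair \<omega> g g' = 0"
    and t: "t \<noteq> 0" "\<forall>g\<in>Gstar. \<Omega> g \<noteq> 0 \<longrightarrow> t \<notin> ray (Zc z g)"
    and branch: "\<forall>g\<in>Gstar. \<Omega> g \<noteq> 0 \<longrightarrow>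
                   continuous_on U (L g) \<and> (\<forall>w\<in>U. exp (L g w) = Zc w g / t)"
    and tau_termwise: "\<forall>b. termwise_diff Gstar (\<lambda>g w. tau_term \<sigma> \<Omega> \<theta> t L g (z(b := w))) (z b)"
    and X_termwise: "\<forall>a. termwise_diff Gstar (\<lambda>g' s. X_term \<omega> \<sigma> \<Omega> \<theta> z (basis_charge a) g' s) t"
  shows "\<forall>a. ((\<lambda>s. XTBA \<omega> \<sigma> \<Omega> \<theta> z (basis_charge a) s / Xsf \<sigma> \<theta> z (basis_charge a) s)
            has_field_derivative
              ((\<Sum>b\<in>UNIV. of_int (\<omega> a b) * deriv (\<lambda>w. log_tau \<sigma> \<Omega> \<theta> t L (z(b := w))) (z b))
               * (XTBA \<omega> \<sigma> \<Omega> \<theta> z (basis_charge a) t / Xsf \<sigma> \<theta> z (basis_charge a) t)))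
            (at t)"
proof (intro allI)
  fix a
  define Sx where "Sx = (\<lambda>s. \<Sum>\<^sub>\<infinity>g'\<in>Gstar. X_term \<omega> \<sigma> \<Omega> \<theta> z (basis_charge a) g' s)"
  define DX where "DX = (\<lambda>g'. deriv (\<lambda>s. X_term \<omega> \<sigma> \<Omega> \<theta> z (basis_charge a) g' s) t)"
  define c :: complex where "c = 1 / (2 * pi * \<i>)"
  define k :: complex where "k = 1 / (4 * pi\<^sup>2)"
  have XT: "(Sx has_field_derivative (\<Sum>\<^sub>\<infinity>g'\<in>Gstar. DX g')) (at t)"
    using X_termwise unfolding termwise_diff_def Sx_def DX_def by blast
  have fun_eq: "(\<lambda>s. XTBA \<omega> \<sigma> \<Omega> \<theta> z (basis_charge a) s / Xsf \<sigma> \<theta> z (basis_charge a) s)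
      = (\<lambda>s. exp (c * Sx s))"
  proof
    fix s
    have "Xsf \<sigma> \<theta> z (basis_charge a) s \<noteq> 0" by (rule Xsf_nz[OF qr])
    then show "XTBA \<omega> \<sigma> \<Omega> \<theta> z (basis_charge a) s / Xsf \<sigma> \<theta> z (basis_charge a) s = exp (c * Sx s)"
      unfolding XTBA_def Sx_def c_def by simp
  qed
  have D1: "((\<lambda>s. exp (c * Sx s)) has_field_derivative exp (c * Sx t) * (c * (\<Sum>\<^sub>\<infinity>g'\<in>Gstar. DX g'))) (at t)"
    by (rule DERIV_chain'[OF DERIV_cmult[OF XT] DERIV_exp])
  define Db where "Db = (\<lambda>b g. deriv (\<lambda>w. tau_term \<sigma> \<Omega> \<theta> t L g (z(b := w))) (z b))"
  have Dsum: "(Db b) summable_on Gstar" for b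
    using tau_termwise unfolding termwise_diff_def Db_def by blast
  have Dlog: "deriv (\<lambda>w. log_tau \<sigma> \<Omega> \<theta> t L (z(b := w))) (z b) = k * (\<Sum>\<^sub>\<infinity>g\<in>Gstar. Db b g)" for b
  proof -
    have "((\<lambda>y. \<Sum>\<^sub>\<infinity>g\<in>Gstar. tau_term \<sigma> \<Omega> \<theta> t L g (z(b := y))) has_field_derivative (\<Sum>\<^sub>\<infinity>g\<in>Gstar. Db b g)) (at (z b))"
      using tau_termwise unfolding termwise_diff_def Db_def by blast
    then have "((\<lambda>w. log_tau \<sigma> \<Omega> \<theta> t L (z(b := w))) has_field_derivative k * (\<Sum>\<^sub>\<infinity>g\<in>Gstar. Db b g)) (at (z b))"
      unfolding log_tau_def k_def by (rule DERIV_cmult)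
    then show ?thesis by (rule DERIV_imp_deriv)
  qed
  have pergen: "(\<Sum>b\<in>UNIV. k * (of_int (\<omega> a b) * Db b g)) = c * DX g" if g: "g \<in> Gstar" for g
  proof (cases "\<Omega> g = 0")
    case True
    have "Db b g = 0" for b unfolding Db_def tau_term_def True by simp
    moreover have "DX g = 0" unfolding DX_def X_term_def True by simp
    ultimately show ?thesis by simp
  next
    case False
    define Z where "Z = Zc z g"
    have Znz': "\<forall>w\<in>U. Zc w g \<noteq> 0" using Znz g False by blast
    have Z0: "Z \<noteq> 0" using Znz' U by (simp add: Z_def)
    have ns: "\<And>u. u \<ge> 0 \<Longrightarrow> t \<noteq> \<i> * Zc z g * of_real u"
      using t g False by (intro not_on_ray) auto
    have br: "continuous_on U (L g)" "\<forall>w\<in>U. exp (L g w) = Zc w g / t" using branch g False by auto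
    define C where "C = of_int (\<sigma> g) * of_rat (\<Omega> g) * exp (2 * pi * \<i> * Zc \<theta> g)"
    define J2 where "J2 = integral {0<..} (\<lambda>u. phi2 u * of_real u / (\<i> * Zc z g * of_real u - t)^2)"
    define H1 where "H1 = integral {0<..} (\<lambda>u. phi1 u / (\<i> * Zc z g * of_real u - t))"
    define H1' where "H1' = integral {0<..} (\<lambda>u. phi1 u / (\<i> * Zc z g * of_real u - t)^2)"
    have Dbv: "Db b g = C * (t * (- (\<i> * of_int (g b)) * J2) - of_int (g b) / Zc z g)" for b
      unfolding Db_def C_def J2_def by (rule tau_deriv[where L=L and g=g, OF U Znz' ns t(1) br])
    have DXv: "DX g = of_rat (\<Omega> g) * of_int (pair \<omega> (basis_charge a) g) * (of_int (\<sigma> g) * exp (2 * pi * \<i> * Zc \<theta> g)) * (H1 + t * H1')"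
      unfolding DX_def H1_def H1'_def using Z0 ns by (intro X_deriv) (auto simp: Z_def)
    have Pc: "(of_int (pair \<omega> (basis_charge a) g) :: complex) = (\<Sum>b\<in>UNIV. of_int (\<omega> a b) * of_int (g b))"
      by (simp add: pair_basis)
    have "(\<Sum>b\<in>UNIV. k * (of_int (\<omega> a b) * Db b g))
        = (\<Sum>b\<in>UNIV. k * (C * (of_int (\<omega> a b) * of_int (g b)) * (- (\<i> * t * J2) - 1 / Zc z g)))"
      unfolding Dbv by (rule sum.cong) (simp_all add: algebra_simps)
    also have "\<dots> = k * (C * of_int (pair \<omega> (basis_charge a) g) * (- (\<i> * t * J2) - 1 / Zc z g))"
      unfolding Pc by (simp add: sum_distrib_left sum_distrib_right mult_ac)
    also have "\<dots> = c * (of_int (pair \<omega> (basis_charge a) g) * C * (H1 + t * H1'))"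
      unfolding k_def c_def
      by (rule key_final) (unfold J2_def H1_def H1'_def, rule key_identity[OF Z0[unfolded Z_def] ns])
    also have "\<dots> = c * DX g" unfolding DXv C_def by (simp add: mult_ac)
    finally show ?thesis .
  qed
  have main_eq: "(\<Sum>b\<in>UNIV. of_int (\<omega> a b) * deriv (\<lambda>w. log_tau \<sigma> \<Omega> \<theta> t L (z(b := w))) (z b))
      = c * (\<Sum>\<^sub>\<infinity>g'\<in>Gstar. DX g')"
  proof -
    have "(\<Sum>b\<in>UNIV. of_int (\<omega> a b) * deriv (\<lambda>w. log_tau \<sigma> \<Omega> \<theta> t L (z(b := w))) (z b))
        = (\<Sum>b\<in>UNIV. \<Sum>\<^sub>\<infinity>g\<in>Gstar. k * (of_int (\<omega> a b) * Db b g))"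
      unfolding Dlog
    proof (rule sum.cong[OF refl])
      fix b
      have "(\<Sum>\<^sub>\<infinity>g\<in>Gstar. k * (of_int (\<omega> a b) * Db b g)) = k * (of_int (\<omega> a b) * (\<Sum>\<^sub>\<infinity>g\<in>Gstar. Db b g))"
        by (simp only: infsum_cmult_right')
      then show "of_int (\<omega> a b) * (k * (\<Sum>\<^sub>\<infinity>g\<in>Gstar. Db b g)) = (\<Sum>\<^sub>\<infinity>g\<in>Gstar. k * (of_int (\<omega> a b) * Db b g))"
        by (simp add: mult_ac)
    qed
    also have "\<dots> = (\<Sum>\<^sub>\<infinity>g\<in>Gstar. \<Sum>b\<in>UNIV. k * (of_int (\<omega> a b) * Db b g))"
    proof -
      have "((\<lambda>g. \<Sum>b\<in>UNIV. k * (of_int (\<omega> a b) * Db b g)) has_sum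
          (\<Sum>b\<in>UNIV. \<Sum>\<^sub>\<infinity>g\<in>Gstar. k * (of_int (\<omega> a b) * Db b g))) Gstar"
        by (intro has_sum_finsum has_sum_infsum summable_on_cmult_right Dsum) simp
      then show ?thesis by (simp add: has_sum_iff)
    qed
    also have "\<dots> = (\<Sum>\<^sub>\<infinity>g\<in>Gstar. c * DX g)" by (rule infsum_cong) (rule pergen)
    also have "\<dots> = c * (\<Sum>\<^sub>\<infinity>g'\<in>Gstar. DX g')" by (rule infsum_cmult_right')
    finally show ?thesis .
  qed
  have XX: "XTBA \<omega> \<sigma> \<Omega> \<theta> z (basis_charge a) t / Xsf \<sigma> \<theta> z (basis_charge a) t = exp (c * Sx t)"
    using fun_eq by (rule fun_cong)
  show "((\<lambda>s. XTBA \<omega> \<sigma> \<Omega> \<theta> z (basis_charge a) s / Xsf \<sigma> \<theta> z (basis_charge a) s)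
            has_field_derivative
              ((\<Sum>b\<in>UNIV. of_int (\<omega> a b) * deriv (\<lambda>w. log_tau \<sigma> \<Omega> \<theta> t L (z(b := w))) (z b))
               * (XTBA \<omega> \<sigma> \<Omega> \<theta> z (basis_charge a) t / Xsf \<sigma> \<theta> z (basis_charge a) t)))
            (at t)"
    unfolding fun_eq XX main_eq using D1 by (simp add: mult_ac)
qed

end
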